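(* Let $G$ and $H$ be two nontrivial connected graphs with $hn_{cc}(H)=2$. Then $hn_{cc}(G)\leq hn_{cc}(G\Box H)\leq hn_{cc}(G)+1$. Moreover, $hn_{cc}(G\Box H)=hn_{cc}(G)$ if and only if there is a minimum cycle hull set $S$ of $G$ such that $S$ can be partitioned into two sets $S_1$ and $S_2$ with $\langle S_1\rangle_C\cap\langle S_2\rangle_C\neq\emptyset$.
   Context: All graphs are finite, simple and undirected. For a graph $G$ and $S\subseteq V(G)$, the cycle interval $\langle S\rangle$ consists of the vertices of $S$ together with every vertex $w\in V(G)\setminus S$ such that $G[S\cup\{w\}]$ contains a cycle through $w$; $S$ is cycle convex if $\langle S\rangle=S$; the cycle convex hull $\langle S\rangle_C$ is the smallest cycle convex set containing $S$; a (cycle) hull set is a set $S$ with $\langle S\rangle_C=V(G)$, and $hn_{cc}(G)$ is the minimum cardinality of a hull set; a minimum hull set is a hull set of cardinality $hn_{cc}(G)$. The Cartesian product $G\Box H$ has vertex set $V(G)\times V(H)$, with $(g_1,h_1)\sim(g_2,h_2)$ iff ($g_1\sim g_2$ and $h_1=h_2$) or ($g_1=g_2$ and $h_1\sim h_2$). A graph is nontrivial if it has at least two vertices. *)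

theory Defs
  imports Main
begin

definition is_graph :: "'a set \<Rightarrow> ('a \<Rightarrow> 'a \<Rightarrow> bool) \<Rightarrow> bool" where
  "is_graph V E \<longleftrightarrow> finite V \<and> (\<forall>x y. E x y \<longrightarrow> x \<in> V \<and> y \<in> V)
     \<and> (\<forall>x y. E x y \<longrightarrow> E y x) \<and> (\<forall>x. \<not> E x x)"

definition connected_graph :: "'a set \<Rightarrow> ('a \<Rightarrow> 'a \<Rightarrow> bool) \<Rightarrow> bool" where
  "connected_graph V E \<longleftrightarrow> (\<forall>x\<in>V. \<forall>y\<in>V. E\<^sup>*\<^sup>* x y)"

definition nontrivial_graph :: "'a set \<Rightarrow> bool" where
  "nontrivial_graph V \<longleftrightarrow> card V \<ge> 2"

definition is_cycle :: "('a \<Rightarrow> 'a \<Rightarrow> bool) \<Rightarrow> 'a list \<Rightarrow> bool" where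
  "is_cycle E xs \<longleftrightarrow> length xs \<ge> 3 \<and> distinct xs
     \<and> (\<forall>i < length xs. E (xs ! i) (xs ! ((i + 1) mod length xs)))"

definition cycle_interval :: "'a set \<Rightarrow> ('a \<Rightarrow> 'a \<Rightarrow> bool) \<Rightarrow> 'a set \<Rightarrow> 'a set" where
  "cycle_interval V E S = S \<union> {w \<in> V - S. \<exists>xs. is_cycle E xs \<and> set xs \<subseteq> S \<union> {w} \<and> w \<in> set xs}"

definition cycle_convex :: "'a set \<Rightarrow> ('a \<Rightarrow> 'a \<Rightarrow> bool) \<Rightarrow> 'a set \<Rightarrow> bool" where
  "cycle_convex V E S \<longleftrightarrow> cycle_interval V E S = S"

definition cycle_hull :: "'a set \<Rightarrow> ('a \<Rightarrow> 'a \<Rightarrow> bool) \<Rightarrow> 'a set \<Rightarrow> 'a set" where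
  "cycle_hull V E S = \<Inter> {C. S \<subseteq> C \<and> C \<subseteq> V \<and> cycle_convex V E C}"

definition is_hull_set :: "'a set \<Rightarrow> ('a \<Rightarrow> 'a \<Rightarrow> bool) \<Rightarrow> 'a set \<Rightarrow> bool" where
  "is_hull_set V E S \<longleftrightarrow> S \<subseteq> V \<and> cycle_hull V E S = V"

definition hn_cc :: "'a set \<Rightarrow> ('a \<Rightarrow> 'a \<Rightarrow> bool) \<Rightarrow> nat" where
  "hn_cc V E = (LEAST n. \<exists>S. is_hull_set V E S \<and> card S = n)"

definition min_hull_set :: "'a set \<Rightarrow> ('a \<Rightarrow> 'a \<Rightarrow> bool) \<Rightarrow> 'a set \<Rightarrow> bool" where
  "min_hull_set V E S \<longleftrightarrow> is_hull_set V E S \<and> card S = hn_cc V E"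

definition box_edges :: "('a \<Rightarrow> 'a \<Rightarrow> bool) \<Rightarrow> ('b \<Rightarrow> 'b \<Rightarrow> bool) \<Rightarrow> 'a \<times> 'b \<Rightarrow> 'a \<times> 'b \<Rightarrow> bool" where
  "box_edges EG EH p q \<longleftrightarrow> (EG (fst p) (fst q) \<and> snd p = snd q) \<or> (fst p = fst q \<and> EH (snd p) (snd q))"

end

theory Submission
  imports Defs
begin

definition rE :: "('a \<Rightarrow> 'a \<Rightarrow> bool) \<Rightarrow> 'a set \<Rightarrow> 'a \<Rightarrow> 'a \<Rightarrow> bool" where
  "rE E Y x y \<longleftrightarrow> E x y \<and> x \<in> Y \<and> y \<in> Y"

definition cyc :: "('a \<Rightarrow> 'a \<Rightarrow> bool) \<Rightarrow> 'a set \<Rightarrow> 'a \<Rightarrow> bool" where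
  "cyc E Y w \<longleftrightarrow> (\<exists>xs. is_cycle E xs \<and> set xs \<subseteq> Y \<union> {w} \<and> w \<in> set xs)"

definition nb2 :: "('a \<Rightarrow> 'a \<Rightarrow> bool) \<Rightarrow> 'a set \<Rightarrow> 'a \<Rightarrow> bool" where
  "nb2 E Y w \<longleftrightarrow> (\<exists>a b. a \<noteq> b \<and> E w a \<and> E w b \<and> a \<in> Y \<and> b \<in> Y \<and> (rE E Y)\<^sup>*\<^sup>* a b)"

lemma is_cycle_rotate:
  assumes "is_cycle E xs" "i < length xs"
  shows "is_cycle E (rotate i xs) \<and> rotate i xs ! 0 = xs ! i"
proof -
  let ?n = "length xs"
  have n3: "?n \<ge> 3" and d: "distinct xs" and adj: "\<forall>k < ?n. E (xs ! k) (xs ! ((k + 1) mod ?n))"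
    using assms(1) unfolding is_cycle_def by auto
  have pos: "0 < length xs" using assms(2) by (cases xs) auto
  have r0: "rotate i xs ! 0 = xs ! i" using nth_rotate[OF pos, of i] assms(2) by simp
  have "\<forall>k < ?n. E (rotate i xs ! k) (rotate i xs ! ((k + 1) mod ?n))"
  proof (intro allI impI)
    fix k assume k: "k < ?n"
    have e1: "rotate i xs ! k = xs ! ((i + k) mod ?n)" using k by (simp add: nth_rotate)
    have lt: "(k + 1) mod ?n < ?n" using pos by simp
    have e2: "rotate i xs ! ((k + 1) mod ?n) = xs ! ((i + (k + 1) mod ?n) mod ?n)"
      using nth_rotate[OF lt] by simp
    have e3: "(i + (k + 1) mod ?n) mod ?n = ((i + k) mod ?n + 1) mod ?n"
      by (simp add: mod_add_right_eq mod_Suc_eq)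
    have "(i + k) mod ?n < ?n" using pos by simp
    then have "E (xs ! ((i + k) mod ?n)) (xs ! (((i + k) mod ?n + 1) mod ?n))" using adj by blast
    then show "E (rotate i xs ! k) (rotate i xs ! ((k + 1) mod ?n))" using e1 e2 e3 by simp
  qed
  then show ?thesis using n3 d r0 unfolding is_cycle_def by simp
qed

lemma cyc_nb2:
  assumes sym: "\<forall>x y. E x y \<longrightarrow> E y x" and "cyc E Y w"
  shows "nb2 E Y w"
proof -
  obtain xs where c: "is_cycle E xs" and s: "set xs \<subseteq> Y \<union> {w}" and w: "w \<in> set xs"
    using assms(2) unfolding cyc_def by blast
  obtain i where i: "i < length xs" "xs ! i = w" using w by (meson in_set_conv_nth)
  define ys where "ys = rotate i xs"
  have cy: "is_cycle E ys" and y0: "ys ! 0 = w" using is_cycle_rotate[OF c i(1)] i(2) ys_def by auto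
  have sy: "set ys \<subseteq> Y \<union> {w}" using s ys_def by simp
  let ?n = "length ys"
  have n3: "?n \<ge> 3" and d: "distinct ys" and adj: "\<forall>k < ?n. E (ys ! k) (ys ! ((k + 1) mod ?n))"
    using cy unfolding is_cycle_def by auto
  have inY: "ys ! k \<in> Y" if "0 < k" "k < ?n" for k
  proof -
    have "ys ! k \<noteq> ys ! 0" using d that by (subst nth_eq_iff_index_eq) auto
    moreover have "ys ! k \<in> set ys" using that by simp
    ultimately show ?thesis using sy y0 by auto
  qed
  have walk: "\<forall>j. j \<le> ?n - 2 \<longrightarrow> (rE E Y)\<^sup>*\<^sup>* (ys ! 1) (ys ! (1 + j))"
  proof (intro allI)
    fix j show "j \<le> ?n - 2 \<longrightarrow> (rE E Y)\<^sup>*\<^sup>* (ys ! 1) (ys ! (1 + j))"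
    proof (induction j)
      case 0 then show ?case by simp
    next
      case (Suc j)
      show ?case
      proof
        assume j: "Suc j \<le> ?n - 2"
        then have h: "(rE E Y)\<^sup>*\<^sup>* (ys ! 1) (ys ! (1 + j))" using Suc by simp
        have lt: "1 + j < ?n" using j n3 by simp
        have "E (ys ! (1 + j)) (ys ! ((1 + j + 1) mod ?n))" using adj lt by blast
        moreover have "(1 + j + 1) mod ?n = 1 + Suc j" using j n3 by simp
        ultimately have "E (ys ! (1 + j)) (ys ! (1 + Suc j))" by simp
        moreover have "ys ! (1 + j) \<in> Y" "ys ! (1 + Suc j) \<in> Y" using inY j n3 by auto
        ultimately have "rE E Y (ys ! (1 + j)) (ys ! (1 + Suc j))" unfolding rE_def by simp
        then show "(rE E Y)\<^sup>*\<^sup>* (ys ! 1) (ys ! (1 + Suc j))" using h by simp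
      qed
    qed
  qed
  have wb: "(rE E Y)\<^sup>*\<^sup>* (ys ! 1) (ys ! (?n - 1))"
    using walk[rule_format, of "?n - 2"] n3 by (simp add: Suc_diff_Suc numeral_2_eq_2)
  have ne: "ys ! 1 \<noteq> ys ! (?n - 1)" using d n3 by (subst nth_eq_iff_index_eq) auto
  have "0 < ?n" using n3 by linarith
  then have "E (ys ! 0) (ys ! ((0 + 1) mod ?n))" using adj by blast
  moreover have "(0 + 1) mod ?n = 1" using n3 by simp
  ultimately have e1: "E w (ys ! 1)" using y0 by simp
  have "E (ys ! (?n - 1)) (ys ! ((?n - 1 + 1) mod ?n))" using adj n3 by simp
  moreover have "?n - 1 + 1 = ?n" using n3 by linarith
  then have "(?n - 1 + 1) mod ?n = 0" by simp
  ultimately have "E (ys ! (?n - 1)) w" using y0 by simp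
  then have e2: "E w (ys ! (?n - 1))" using sym by blast
  show ?thesis unfolding nb2_def using ne e1 e2 wb inY n3 by (intro exI[of _ "ys ! 1"] exI[of _ "ys ! (?n - 1)"]) auto
qed

lemma walk_path:
  assumes "(rE E Y)\<^sup>*\<^sup>* a b" "a \<in> Y"
  shows "\<exists>ps. ps \<noteq> [] \<and> hd ps = a \<and> last ps = b \<and> distinct ps \<and> set ps \<subseteq> Y
           \<and> (\<forall>i. Suc i < length ps \<longrightarrow> E (ps ! i) (ps ! Suc i))"
  using assms(1)
proof (induction rule: rtranclp_induct)
  case base
  then show ?case using assms(2) by (intro exI[of _ "[a]"]) auto
next
  case (step y z)
  then obtain ps where p: "ps \<noteq> []" "hd ps = a" "last ps = y" "distinct ps" "set ps \<subseteq> Y"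
    "\<forall>i. Suc i < length ps \<longrightarrow> E (ps ! i) (ps ! Suc i)" by blast
  have ez: "E y z" "z \<in> Y" using step(2) unfolding rE_def by auto
  show ?case
  proof (cases "z \<in> set ps")
    case True
    then obtain j where j: "j < length ps" "ps ! j = z" by (meson in_set_conv_nth)
    define qs where "qs = take (Suc j) ps"
    have "qs \<noteq> []" using p(1) qs_def by simp
    moreover have "hd qs = a" using p(1,2) qs_def by simp
    moreover have "last qs = z" using j qs_def by (simp add: take_Suc_conv_app_nth)
    moreover have "distinct qs" using p(4) qs_def by simp
    moreover have "set qs \<subseteq> Y" using p(5) qs_def by (meson order_trans set_take_subset)
    moreover have "\<forall>i. Suc i < length qs \<longrightarrow> E (qs ! i) (qs ! Suc i)" using p(6) qs_def by auto
    ultimately show ?thesis by blast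
  next
    case False
    define qs where "qs = ps @ [z]"
    have "qs \<noteq> []" using qs_def by simp
    moreover have "hd qs = a" using p(1,2) qs_def by simp
    moreover have "last qs = z" using qs_def by simp
    moreover have "distinct qs" using p(4) False qs_def by simp
    moreover have "set qs \<subseteq> Y" using p(5) ez qs_def by simp
    moreover have "\<forall>i. Suc i < length qs \<longrightarrow> E (qs ! i) (qs ! Suc i)"
    proof (intro allI impI)
      fix i assume i: "Suc i < length qs"
      show "E (qs ! i) (qs ! Suc i)"
      proof (cases "Suc i < length ps")
        case True then show ?thesis using p(6) qs_def by (simp add: nth_append)
      next
        case False
        then have "Suc i = length ps" using i qs_def by simp
        then have "i = length ps - 1" by linarith
        then have "qs ! i = y" "qs ! Suc i = z" using p(1,3) qs_def
          by (auto simp add: nth_append last_conv_nth)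
        then show ?thesis using ez by simp
      qed
    qed
    ultimately show ?thesis by blast
  qed
qed

lemma nb2_cyc:
  assumes sym: "\<forall>x y. E x y \<longrightarrow> E y x" and "nb2 E Y w" and "w \<notin> Y"
  shows "cyc E Y w"
proof -
  obtain a b where ab: "a \<noteq> b" "E w a" "E w b" "a \<in> Y" "b \<in> Y" "(rE E Y)\<^sup>*\<^sup>* a b"
    using assms(2) unfolding nb2_def by blast
  obtain ps where p: "ps \<noteq> []" "hd ps = a" "last ps = b" "distinct ps" "set ps \<subseteq> Y"
    "\<forall>i. Suc i < length ps \<longrightarrow> E (ps ! i) (ps ! Suc i)" using walk_path[OF ab(6) ab(4)] by blast
  have l2: "length ps \<ge> 2"
  proof (rule ccontr)
    assume "\<not> length ps \<ge> 2"
    moreover have "length ps \<noteq> 0" using p(1) by simp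
    ultimately have "length ps = 1" by linarith
    then obtain x where "ps = [x]" by (metis One_nat_def length_0_conv length_Suc_conv)
    then have "hd ps = last ps" by simp
    then show False using p ab by simp
  qed
  define xs where "xs = w # ps"
  have "is_cycle E xs" unfolding is_cycle_def
  proof (intro conjI)
    show "3 \<le> length xs" using l2 xs_def by simp
    show "distinct xs" using p(4,5) assms(3) xs_def by auto
    show "\<forall>i<length xs. E (xs ! i) (xs ! ((i + 1) mod length xs))"
    proof (intro allI impI)
      fix i assume i: "i < length xs"
      show "E (xs ! i) (xs ! ((i + 1) mod length xs))"
      proof (cases i)
        case 0
        then have "xs ! i = w" "xs ! ((i + 1) mod length xs) = a" using l2 p(1,2) xs_def
          by (auto simp add: hd_conv_nth)
        then show ?thesis using ab by simp
      next
        case (Suc j)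
        show ?thesis
        proof (cases "Suc j < length ps")
          case True
          then have "xs ! i = ps ! j" "xs ! ((i + 1) mod length xs) = ps ! Suc j" using Suc xs_def by auto
          then show ?thesis using p(6) True by simp
        next
          case False
          then have j: "Suc j = length ps" using i Suc xs_def by simp
          then have "xs ! i = b" using Suc xs_def p(1,3) by (simp add: last_conv_nth)
          moreover have "(i + 1) mod length xs = 0" using j Suc xs_def by simp
          ultimately show ?thesis using ab sym xs_def by simp
        qed
      qed
    qed
  qed
  moreover have "set xs \<subseteq> Y \<union> {w}" "w \<in> set xs" using p(5) xs_def by auto
  ultimately show ?thesis unfolding cyc_def by blast
qed

lemma convex_iff_cyc:
  "cycle_convex V E C \<longleftrightarrow> (\<forall>w \<in> V - C. \<not> cyc E C w)"
  unfolding cycle_convex_def cycle_interval_def cyc_def by blast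

lemma graph_sym: "is_graph V E \<Longrightarrow> \<forall>x y. E x y \<longrightarrow> E y x"
  unfolding is_graph_def by blast

lemma convex_iff_nb2s:
  assumes "\<forall>x y. E x y \<longrightarrow> E y x"
  shows "cycle_convex V E C \<longleftrightarrow> (\<forall>w \<in> V - C. \<not> nb2 E C w)"
  using convex_iff_cyc[of V E C] cyc_nb2[OF assms] nb2_cyc[OF assms]
  by blast

lemma convex_iff_nb2:
  assumes "is_graph V E"
  shows "cycle_convex V E C \<longleftrightarrow> (\<forall>w \<in> V - C. \<not> nb2 E C w)"
  using convex_iff_nb2s[OF graph_sym[OF assms]] .

lemma hull_least:
  "S \<subseteq> C \<Longrightarrow> C \<subseteq> V \<Longrightarrow> cycle_convex V E C \<Longrightarrow> cycle_hull V E S \<subseteq> C"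
  unfolding cycle_hull_def by blast

lemma V_convex: "cycle_convex V E V"
  unfolding cycle_convex_def cycle_interval_def by blast

lemma hull_sub: "S \<subseteq> V \<Longrightarrow> cycle_hull V E S \<subseteq> V"
  using hull_least[OF _ _ V_convex] by blast

lemma hull_incl: "S \<subseteq> cycle_hull V E S"
  unfolding cycle_hull_def by blast

lemma hull_convex:
  assumes "S \<subseteq> V"
  shows "cycle_convex V E (cycle_hull V E S)"
  unfolding convex_iff_cyc
proof (intro ballI notI)
  fix w assume w: "w \<in> V - cycle_hull V E S" and c: "cyc E (cycle_hull V E S) w"
  then obtain C where C: "S \<subseteq> C" "C \<subseteq> V" "cycle_convex V E C" "w \<notin> C"
    unfolding cycle_hull_def by blast
  have "cycle_hull V E S \<subseteq> C" using hull_least[OF C(1-3)] .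
  then have "cyc E C w" using c unfolding cyc_def by blast
  then show False using C(3,4) w unfolding convex_iff_cyc by blast
qed

lemma empty_convex: "cycle_convex V E {}"
  unfolding convex_iff_cyc cyc_def
proof (intro ballI notI)
  fix w assume "\<exists>xs. is_cycle E xs \<and> set xs \<subseteq> {} \<union> {w} \<and> w \<in> set xs"
  then obtain xs where "is_cycle E xs" "set xs \<subseteq> {w}" by blast
  then have "length xs \<ge> 3" "distinct xs" unfolding is_cycle_def by auto
  moreover have "card (set xs) \<le> 1" using \<open>set xs \<subseteq> {w}\<close>
    by (metis card.empty card.insert card_mono empty_iff finite.intros(1) finite.intros(2) One_nat_def)
  ultimately show False using distinct_card[of xs] by simp
qed

lemma hull_empty: "cycle_hull V E {} = {}"
  using hull_least[OF _ _ empty_convex, of "{}" V E] by blast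

lemma hull_mono: "S \<subseteq> S' \<Longrightarrow> S' \<subseteq> V \<Longrightarrow> cycle_hull V E S \<subseteq> cycle_hull V E S'"
  using hull_least[OF _ hull_sub hull_convex] hull_incl by (metis order_trans)

lemma hull_setI:
  assumes "S \<subseteq> V" "\<And>C. S \<subseteq> C \<Longrightarrow> C \<subseteq> V \<Longrightarrow> cycle_convex V E C \<Longrightarrow> V \<subseteq> C"
  shows "is_hull_set V E S"
  using assms hull_sub[OF assms(1)] hull_incl[of S V E] hull_convex[OF assms(1)]
  unfolding is_hull_set_def by blast

lemma hull_set_convex:
  assumes "is_hull_set V E S" "S \<subseteq> C" "C \<subseteq> V" "cycle_convex V E C"
  shows "C = V"
  using hull_least[OF assms(2-4)] assms(1,3) unfolding is_hull_set_def by blast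

lemma hn_le: "is_hull_set V E S \<Longrightarrow> hn_cc V E \<le> card S"
  unfolding hn_cc_def by (rule Least_le) blast

lemma V_hull_set: "is_hull_set V E V"
  unfolding is_hull_set_def using hull_sub[of V V E] hull_incl[of V V E] by blast

lemma hn_ex: "\<exists>S. min_hull_set V E S"
proof -
  have "\<exists>n S. is_hull_set V E S \<and> card S = n" using V_hull_set by blast
  then have "\<exists>S. is_hull_set V E S \<and> card S = hn_cc V E"
    unfolding hn_cc_def by (rule LeastI_ex)
  then show ?thesis unfolding min_hull_set_def by blast
qed

lemma box_sym:
  assumes "is_graph VG EG" "is_graph VH EH"
  shows "\<forall>x y. box_edges EG EH x y \<longrightarrow> box_edges EG EH y x"
  using assms unfolding is_graph_def box_edges_def by auto

lemma lift_walk_G: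
  assumes "(rE EG D)\<^sup>*\<^sup>* a b" "\<forall>g \<in> D. (g, h) \<in> C"
  shows "(rE (box_edges EG EH) C)\<^sup>*\<^sup>* (a, h) (b, h)"
  using assms(1)
proof (induction rule: rtranclp_induct)
  case base then show ?case by simp
next
  case (step y z)
  then have "rE (box_edges EG EH) C (y, h) (z, h)"
    using assms(2) unfolding rE_def box_edges_def by auto
  then show ?case using step(3) by simp
qed

lemma lift_walk_H:
  assumes "(rE EH D)\<^sup>*\<^sup>* a b" "\<forall>h \<in> D. (g, h) \<in> C"
  shows "(rE (box_edges EG EH) C)\<^sup>*\<^sup>* (g, a) (g, b)"
  using assms(1)
proof (induction rule: rtranclp_induct)
  case base then show ?case by simp
next
  case (step y z)
  then have "rE (box_edges EG EH) C (g, y) (g, z)"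
    using assms(2) unfolding rE_def box_edges_def by auto
  then show ?case using step(3) by simp
qed

lemma layer_convex:
  assumes gG: "is_graph VG EG" and gH: "is_graph VH EH"
    and cC: "cycle_convex (VG \<times> VH) (box_edges EG EH) C" and h: "h \<in> VH"
  shows "cycle_convex VG EG {g \<in> VG. (g, h) \<in> C}"
  unfolding convex_iff_nb2[OF gG]
proof (intro ballI notI)
  let ?D = "{g \<in> VG. (g, h) \<in> C}"
  fix w assume w: "w \<in> VG - ?D" and n: "nb2 EG ?D w"
  then obtain a b where ab: "a \<noteq> b" "EG w a" "EG w b" "a \<in> ?D" "b \<in> ?D" "(rE EG ?D)\<^sup>*\<^sup>* a b"
    unfolding nb2_def by blast
  have wk: "(rE (box_edges EG EH) C)\<^sup>*\<^sup>* (a, h) (b, h)" using lift_walk_G[OF ab(6), of h C] ab(4,5) by simp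
  have e1: "box_edges EG EH (w, h) (a, h)" "box_edges EG EH (w, h) (b, h)"
    using ab(2,3) unfolding box_edges_def by simp_all
  have i1: "(a, h) \<in> C" "(b, h) \<in> C" "(a, h) \<noteq> (b, h)" using ab(1,4,5) by simp_all
  have "nb2 (box_edges EG EH) C (w, h)" unfolding nb2_def using wk e1 i1 by blast
  moreover have "(w, h) \<in> VG \<times> VH - C" using w h by auto
  ultimately show False using cC unfolding convex_iff_nb2s[OF box_sym[OF gG gH]] by blast
qed

lemma fiber_convex:
  assumes gG: "is_graph VG EG" and gH: "is_graph VH EH"
    and cC: "cycle_convex (VG \<times> VH) (box_edges EG EH) C" and g: "g \<in> VG"
  shows "cycle_convex VH EH {h \<in> VH. (g, h) \<in> C}"
  unfolding convex_iff_nb2[OF gH]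
proof (intro ballI notI)
  let ?D = "{h \<in> VH. (g, h) \<in> C}"
  fix w assume w: "w \<in> VH - ?D" and n: "nb2 EH ?D w"
  then obtain a b where ab: "a \<noteq> b" "EH w a" "EH w b" "a \<in> ?D" "b \<in> ?D" "(rE EH ?D)\<^sup>*\<^sup>* a b"
    unfolding nb2_def by blast
  have wk: "(rE (box_edges EG EH) C)\<^sup>*\<^sup>* (g, a) (g, b)" using lift_walk_H[OF ab(6), of g C] ab(4,5) by simp
  have e1: "box_edges EG EH (g, w) (g, a)" "box_edges EG EH (g, w) (g, b)"
    using ab(2,3) unfolding box_edges_def by simp_all
  have i1: "(g, a) \<in> C" "(g, b) \<in> C" "(g, a) \<noteq> (g, b)" using ab(1,4,5) by simp_all
  have "nb2 (box_edges EG EH) C (g, w)" unfolding nb2_def using wk e1 i1 by blast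
  moreover have "(g, w) \<in> VG \<times> VH - C" using w g by auto
  ultimately show False using cC unfolding convex_iff_nb2s[OF box_sym[OF gG gH]] by blast
qed

lemma square:
  assumes gG: "is_graph VG EG" and gH: "is_graph VH EH"
    and cC: "cycle_convex (VG \<times> VH) (box_edges EG EH) C"
    and in1: "(a, b) \<in> C" "(a', b) \<in> C" "(a, b') \<in> C" and e: "EG a a'" "EH b b'"
  shows "(a', b') \<in> C"
proof (rule ccontr)
  assume nC: "(a', b') \<notin> C"
  have v: "a' \<in> VG" "b' \<in> VH" "a \<in> VG" "b \<in> VH" using e gG gH unfolding is_graph_def by blast+
  have s: "EG a' a" "EH b' b" "a \<noteq> a'" using e gG gH unfolding is_graph_def by blast+
  have w1: "rE (box_edges EG EH) C (a', b) (a, b)" using in1 s unfolding rE_def box_edges_def by auto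
  have w2: "rE (box_edges EG EH) C (a, b) (a, b')" using in1 e unfolding rE_def box_edges_def by auto
  have "(rE (box_edges EG EH) C)\<^sup>*\<^sup>* (a', b) (a, b')" using w1 w2 by auto
  moreover have "box_edges EG EH (a', b') (a', b)" "box_edges EG EH (a', b') (a, b')"
    using s unfolding box_edges_def by simp_all
  moreover have "(a', b) \<noteq> (a, b')" using s by simp
  ultimately have "nb2 (box_edges EG EH) C (a', b')" unfolding nb2_def
    using in1 by blast
  moreover have "(a', b') \<in> VG \<times> VH - C" using v nC by auto
  ultimately show False using cC unfolding convex_iff_nb2s[OF box_sym[OF gG gH]] by blast
qed

lemma fill:
  assumes gG: "is_graph VG EG" and gH: "is_graph VH EH"
    and cG: "connected_graph VG EG" and cH: "connected_graph VH EH"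
    and cC: "cycle_convex (VG \<times> VH) (box_edges EG EH) C"
    and u: "u \<in> VH" and g0: "g0 \<in> VG"
    and L: "\<forall>g \<in> VG. (g, u) \<in> C" and F: "\<forall>h \<in> VH. (g0, h) \<in> C"
  shows "VG \<times> VH \<subseteq> C"
proof -
  have "\<forall>g \<in> VG. (g, h) \<in> C" if h: "h \<in> VH" for h
  proof -
    have "EH\<^sup>*\<^sup>* u h" using cH u h unfolding connected_graph_def by blast
    then show ?thesis
    proof (induction rule: rtranclp_induct)
      case base then show ?case using L by simp
    next
      case (step h1 h2)
      have h2: "h2 \<in> VH" using step(2) gH unfolding is_graph_def by blast
      show ?case
      proof
        fix g assume g: "g \<in> VG"
        have "EG\<^sup>*\<^sup>* g0 g" using cG g0 g unfolding connected_graph_def by blast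
        then show "(g, h2) \<in> C"
        proof (induction rule: rtranclp_induct)
          case base then show ?case using F h2 by simp
        next
          case (step g1 g2)
          have "g1 \<in> VG" "g2 \<in> VG" using step(2) gG unfolding is_graph_def by blast+
          then have "(g1, h1) \<in> C" "(g2, h1) \<in> C" using step.prems \<open>\<forall>g\<in>VG. (g, h1) \<in> C\<close> by auto
          then show ?case using square[OF gG gH cC _ _ step(3) step(2) \<open>EH h1 h2\<close>] by blast
        qed
      qed
    qed
  qed
  then show ?thesis by blast
qed

lemma proj_walk:
  assumes "(rE (box_edges EG EH) (C \<times> VH))\<^sup>*\<^sup>* p q"
  shows "(rE EG C)\<^sup>*\<^sup>* (fst p) (fst q)"
  using assms
proof (induction rule: rtranclp_induct)
  case base then show ?case by simp
next
  case (step y z)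
  then have "fst y = fst z \<or> rE EG C (fst y) (fst z)"
    unfolding rE_def box_edges_def by auto
  then show ?case using step(3) by auto
qed

lemma proj_hull:
  assumes gG: "is_graph VG EG" and gH: "is_graph VH EH" and ne: "VH \<noteq> {}"
    and T: "is_hull_set (VG \<times> VH) (box_edges EG EH) T"
  shows "is_hull_set VG EG (fst ` T)"
proof -
  let ?S = "fst ` T"
  let ?C = "cycle_hull VG EG ?S"
  have TP: "T \<subseteq> VG \<times> VH" using T unfolding is_hull_set_def by blast
  then have SV: "?S \<subseteq> VG" by auto
  have CV: "?C \<subseteq> VG" using hull_sub[OF SV] .
  have cc: "cycle_convex VG EG ?C" using hull_convex[OF SV] .
  have "cycle_convex (VG \<times> VH) (box_edges EG EH) (?C \<times> VH)"
    unfolding convex_iff_nb2s[OF box_sym[OF gG gH]]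
  proof (intro ballI notI)
    fix w assume w: "w \<in> VG \<times> VH - ?C \<times> VH" and n: "nb2 (box_edges EG EH) (?C \<times> VH) w"
    obtain g h where gh: "w = (g, h)" by force
    have g: "g \<in> VG" "g \<notin> ?C" using w gh by auto
    obtain a b where ab: "a \<noteq> b" "box_edges EG EH w a" "box_edges EG EH w b" "a \<in> ?C \<times> VH"
      "b \<in> ?C \<times> VH" "(rE (box_edges EG EH) (?C \<times> VH))\<^sup>*\<^sup>* a b"
      using n unfolding nb2_def by blast
    have ea: "EG g (fst a) \<and> snd a = h" using ab(2,4) g gh unfolding box_edges_def by auto
    have eb: "EG g (fst b) \<and> snd b = h" using ab(3,5) g gh unfolding box_edges_def by auto
    have "fst a \<noteq> fst b" using ab(1) ea eb by (metis prod.collapse)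
    moreover have "fst a \<in> ?C" "fst b \<in> ?C" using ab(4,5) by auto
    ultimately have "nb2 EG ?C g" unfolding nb2_def using ea eb proj_walk[OF ab(6)] by blast
    then show False using cc g unfolding convex_iff_nb2[OF gG] by blast
  qed
  moreover have "T \<subseteq> ?C \<times> VH" using TP hull_incl[of ?S VG EG] by force
  moreover have "?C \<times> VH \<subseteq> VG \<times> VH" using CV by auto
  ultimately have eq: "?C \<times> VH = VG \<times> VH" using hull_set_convex[OF T] by blast
  have "VG \<subseteq> ?C"
  proof
    fix g assume "g \<in> VG"
    obtain h where "h \<in> VH" using ne by blast
    then have "(g, h) \<in> ?C \<times> VH" using eq \<open>g \<in> VG\<close> by simp
    then show "g \<in> ?C" by simp
  qed
  then show ?thesis using SV CV unfolding is_hull_set_def by blast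
qed

lemma layered_walk:
  assumes gH: "is_graph VH EH"
    and disj: "\<forall>h1 \<in> VH. \<forall>h2 \<in> VH. h1 \<noteq> h2 \<longrightarrow> A h1 \<inter> A h2 = {}"
    and w: "(rE (box_edges EG EH) {p \<in> VG \<times> VH. fst p \<in> A (snd p)})\<^sup>*\<^sup>* p q"
  shows "snd q = snd p \<and> (rE EG (A (snd p)))\<^sup>*\<^sup>* (fst p) (fst q)"
  using w
proof (induction rule: rtranclp_induct)
  case base then show ?case by simp
next
  case (step y z)
  have yz: "y \<in> VG \<times> VH" "fst y \<in> A (snd y)" "z \<in> VG \<times> VH" "fst z \<in> A (snd z)"
    "box_edges EG EH y z" using step(2) unfolding rE_def by auto
  show ?case
  proof (cases "snd y = snd z")
    case True
    then have "EG (fst y) (fst z)" using yz(5) gH unfolding box_edges_def is_graph_def by auto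
    then have "rE EG (A (snd p)) (fst y) (fst z)" using yz True step(3) unfolding rE_def by auto
    then show ?thesis using step(3) True by auto
  next
    case False
    then have "fst y = fst z" using yz(5) unfolding box_edges_def by auto
    then have "fst y \<in> A (snd y) \<inter> A (snd z)" using yz by auto
    then show ?thesis using disj yz False by (metis empty_iff mem_Times_iff)
  qed
qed

lemma layered_convex:
  assumes gG: "is_graph VG EG" and gH: "is_graph VH EH"
    and cA: "\<forall>h \<in> VH. cycle_convex VG EG (A h)"
    and disj: "\<forall>h1 \<in> VH. \<forall>h2 \<in> VH. h1 \<noteq> h2 \<longrightarrow> A h1 \<inter> A h2 = {}"
  shows "cycle_convex (VG \<times> VH) (box_edges EG EH) {p \<in> VG \<times> VH. fst p \<in> A (snd p)}"
  unfolding convex_iff_nb2s[OF box_sym[OF gG gH]]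
proof (intro ballI notI)
  let ?C = "{p \<in> VG \<times> VH. fst p \<in> A (snd p)}"
  fix w assume w: "w \<in> VG \<times> VH - ?C" and n: "nb2 (box_edges EG EH) ?C w"
  obtain g h where gh: "w = (g, h)" by force
  have g: "g \<in> VG" "h \<in> VH" "g \<notin> A h" using w gh by auto
  obtain a b where ab: "a \<noteq> b" "box_edges EG EH w a" "box_edges EG EH w b" "a \<in> ?C"
    "b \<in> ?C" "(rE (box_edges EG EH) ?C)\<^sup>*\<^sup>* a b"
    using n unfolding nb2_def by blast
  have lw: "snd b = snd a" "(rE EG (A (snd a)))\<^sup>*\<^sup>* (fst a) (fst b)"
    using layered_walk[OF gH disj ab(6)] by auto
  have irr: "\<forall>x. \<not> EH x x" using gH unfolding is_graph_def by blast
  show False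
  proof (cases "snd a = h")
    case True
    then have ea: "EG g (fst a)" using ab(2) gh irr unfolding box_edges_def by auto
    have eb: "EG g (fst b)" using ab(3) gh irr lw(1) True unfolding box_edges_def by auto
    have "fst a \<noteq> fst b" using ab(1) lw(1) by (metis prod.collapse)
    then have "nb2 EG (A h) g" unfolding nb2_def using ea eb ab(4,5) lw True by auto
    then show False using cA g unfolding convex_iff_nb2[OF gG] by blast
  next
    case False
    then have "fst a = g" using ab(2) gh unfolding box_edges_def by auto
    moreover have "fst b = g" using ab(3) gh lw(1) False unfolding box_edges_def by auto
    ultimately show False using ab(1) lw(1) by (metis prod.collapse)
  qed
qed

lemma walk_mono:
  assumes "(rE E A)\<^sup>*\<^sup>* a b" "A \<subseteq> B"
  shows "(rE E B)\<^sup>*\<^sup>* a b"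
  using assms(1)
proof (induction rule: rtranclp_induct)
  case base then show ?case by simp
next
  case (step y z)
  then have "rE E B y z" using assms(2) unfolding rE_def by auto
  then show ?case using step(3) by simp
qed

lemma walk_stay:
  assumes "(rE E (U1 \<union> U2))\<^sup>*\<^sup>* a b" "a \<in> U1" "\<forall>y \<in> U1. \<forall>z \<in> U2. \<not> E y z"
  shows "(rE E U1)\<^sup>*\<^sup>* a b \<and> b \<in> U1"
  using assms(1)
proof (induction rule: rtranclp_induct)
  case base then show ?case using assms(2) by simp
next
  case (step y z)
  then have "z \<in> U1" using assms(3) unfolding rE_def by blast
  then have "rE E U1 y z" using step unfolding rE_def by auto
  then show ?case using step(3) \<open>z \<in> U1\<close> by (meson rtranclp.rtrancl_into_rtrancl)
qed

lemma split_comp: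
  assumes gG: "is_graph V E" and SV: "S \<subseteq> V" and x: "x \<in> cycle_hull V E S"
  defines "K \<equiv> {g \<in> cycle_hull V E S. (rE E (cycle_hull V E S))\<^sup>*\<^sup>* x g}"
  shows "x \<in> K" "K \<subseteq> cycle_hull V E (S \<inter> K)" "\<forall>g \<in> K. (rE E K)\<^sup>*\<^sup>* x g"
proof -
  let ?P = "cycle_hull V E S"
  have PV: "?P \<subseteq> V" using hull_sub[OF SV] .
  have cP: "cycle_convex V E ?P" using hull_convex[OF SV] .
  have sym: "\<forall>a b. E a b \<longrightarrow> E b a" using graph_sym[OF gG] .
  show xK: "x \<in> K" using x K_def by simp
  have KP: "K \<subseteq> ?P" using K_def by blast
  have noedge: "b \<in> K" if "a \<in> K" "b \<in> ?P" "E a b" for a b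
  proof -
    have "(rE E ?P)\<^sup>*\<^sup>* x a" "a \<in> ?P" using that(1) K_def by auto
    moreover have "rE E ?P a b" using that KP unfolding rE_def by auto
    ultimately show ?thesis using that(2) K_def by auto
  qed
  have cK: "cycle_convex V E K" unfolding convex_iff_nb2[OF gG]
  proof (intro ballI notI)
    fix w assume w: "w \<in> V - K" and n: "nb2 E K w"
    then obtain a b where ab: "a \<noteq> b" "E w a" "E w b" "a \<in> K" "b \<in> K" "(rE E K)\<^sup>*\<^sup>* a b"
      unfolding nb2_def by blast
    show False
    proof (cases "w \<in> ?P")
      case True
      then show False using noedge[OF ab(4) True] sym ab(2) w by blast
    next
      case False
      have "nb2 E ?P w" unfolding nb2_def using ab KP walk_mono[OF ab(6) KP] by blast
      then show False using cP False w unfolding convex_iff_nb2[OF gG] by blast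
    qed
  qed
  have cPK: "cycle_convex V E (?P - K)" unfolding convex_iff_nb2[OF gG]
  proof (intro ballI notI)
    fix w assume w: "w \<in> V - (?P - K)" and n: "nb2 E (?P - K) w"
    then obtain a b where ab: "a \<noteq> b" "E w a" "E w b" "a \<in> ?P - K" "b \<in> ?P - K"
      "(rE E (?P - K))\<^sup>*\<^sup>* a b"
      unfolding nb2_def by blast
    show False
    proof (cases "w \<in> ?P")
      case True
      then have "w \<in> K" using w by blast
      then show False using noedge[of w a] ab by blast
    next
      case False
      have "nb2 E ?P w" unfolding nb2_def using ab walk_mono[OF ab(6), of ?P] by blast
      then show False using cP False w unfolding convex_iff_nb2[OF gG] by blast
    qed
  qed
  let ?U1 = "cycle_hull V E (S \<inter> K)"
  let ?U2 = "cycle_hull V E (S - K)"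
  have KV: "K \<subseteq> V" using KP PV by blast
  have U1K: "?U1 \<subseteq> K" by (rule hull_least[OF _ KV cK]) blast
  have s2: "S - K \<subseteq> ?P - K" using hull_incl[of S V E] by blast
  have s2v: "?P - K \<subseteq> V" using PV by blast
  have U2K: "?U2 \<subseteq> ?P - K" by (rule hull_least[OF s2 s2v cPK])
  have sk1: "S \<inter> K \<subseteq> V" and sk2: "S - K \<subseteq> V" using SV by blast+
  have cU1: "cycle_convex V E ?U1" by (rule hull_convex[OF sk1])
  have cU2: "cycle_convex V E ?U2" by (rule hull_convex[OF sk2])
  have ne12: "\<forall>y \<in> ?U1. \<forall>z \<in> ?U2. \<not> E y z" using U1K U2K noedge by blast
  have ne21: "\<forall>y \<in> ?U2. \<forall>z \<in> ?U1. \<not> E y z" using U1K U2K noedge sym by blast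
  have cU: "cycle_convex V E (?U1 \<union> ?U2)" unfolding convex_iff_nb2[OF gG]
  proof (intro ballI notI)
    fix w assume w: "w \<in> V - (?U1 \<union> ?U2)" and n: "nb2 E (?U1 \<union> ?U2) w"
    then obtain a b where ab: "a \<noteq> b" "E w a" "E w b" "a \<in> ?U1 \<union> ?U2" "b \<in> ?U1 \<union> ?U2"
      "(rE E (?U1 \<union> ?U2))\<^sup>*\<^sup>* a b"
      unfolding nb2_def by blast
    show False
    proof (cases "a \<in> ?U1")
      case True
      then have "(rE E ?U1)\<^sup>*\<^sup>* a b \<and> b \<in> ?U1" using walk_stay[OF ab(6) True ne12] by blast
      then have "nb2 E ?U1 w" unfolding nb2_def using ab True by blast
      then show False using cU1 w unfolding convex_iff_nb2[OF gG] by blast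
    next
      case False
      then have a2: "a \<in> ?U2" using ab(4) by blast
      have "(rE E (?U2 \<union> ?U1))\<^sup>*\<^sup>* a b" using ab(6) by (simp add: Un_commute)
      then have "(rE E ?U2)\<^sup>*\<^sup>* a b \<and> b \<in> ?U2" using walk_stay[OF _ a2 ne21] by blast
      then have "nb2 E ?U2 w" unfolding nb2_def using ab a2 by blast
      then show False using cU2 w unfolding convex_iff_nb2[OF gG] by blast
    qed
  qed
  have "?U1 \<union> ?U2 \<subseteq> V" using hull_sub[OF sk1] hull_sub[OF sk2] by blast
  moreover have "S \<subseteq> ?U1 \<union> ?U2" using hull_incl[of "S \<inter> K" V E] hull_incl[of "S - K" V E] by blast
  ultimately have "?P \<subseteq> ?U1 \<union> ?U2" using hull_least[OF _ _ cU] by blast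
  then show "K \<subseteq> ?U1" using KP U2K by blast
  show "\<forall>g \<in> K. (rE E K)\<^sup>*\<^sup>* x g"
  proof
    fix g assume "g \<in> K"
    then have "(rE E (K \<union> (?P - K)))\<^sup>*\<^sup>* x g" using K_def KP by (simp add: Un_absorb1)
    moreover have "\<forall>y \<in> K. \<forall>z \<in> ?P - K. \<not> E y z" using noedge by blast
    ultimately show "(rE E K)\<^sup>*\<^sup>* x g" using walk_stay[OF _ xK] by blast
  qed
qed

lemma upper:
  assumes gG: "is_graph VG EG" and gH: "is_graph VH EH"
    and cG: "connected_graph VG EG" and cH: "connected_graph VH EH"
    and uv: "is_hull_set VH EH {u, v}"
    and S: "is_hull_set VG EG S" and g0: "g0 \<in> S"
  shows "\<exists>T. is_hull_set (VG \<times> VH) (box_edges EG EH) T \<and> card T \<le> card S + 1"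
proof -
  define T where "T = (\<lambda>g. (g, u)) ` S \<union> {(g0, v)}"
  have SV: "S \<subseteq> VG" using S unfolding is_hull_set_def by blast
  have uvV: "u \<in> VH" "v \<in> VH" using uv unfolding is_hull_set_def by auto
  have fS: "finite S" using SV gG unfolding is_graph_def by (meson finite_subset)
  have "card T \<le> card ((\<lambda>g. (g, u)) ` S) + card {(g0, v)}" unfolding T_def by (rule card_Un_le)
  also have "\<dots> \<le> card S + 1" using card_image_le[OF fS] by simp
  finally have cT: "card T \<le> card S + 1" .
  have "is_hull_set (VG \<times> VH) (box_edges EG EH) T"
  proof (rule hull_setI)
    show "T \<subseteq> VG \<times> VH" using SV uvV g0 T_def by auto
  next
    fix C assume TC: "T \<subseteq> C" and CP: "C \<subseteq> VG \<times> VH" and cC: "cycle_convex (VG \<times> VH) (box_edges EG EH) C"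
    let ?D = "{g \<in> VG. (g, u) \<in> C}"
    have "?D = VG"
      using hull_set_convex[OF S _ _ layer_convex[OF gG gH cC uvV(1)]] TC SV T_def by blast
    then have L: "\<forall>g \<in> VG. (g, u) \<in> C" by blast
    let ?F = "{h \<in> VH. (g0, h) \<in> C}"
    have "?F = VH"
      using hull_set_convex[OF uv _ _ fiber_convex[OF gG gH cC]] TC SV uvV g0 T_def by blast
    then have F: "\<forall>h \<in> VH. (g0, h) \<in> C" by blast
    show "VG \<times> VH \<subseteq> C" using fill[OF gG gH cG cH cC uvV(1) _ L F] g0 SV by blast
  qed
  then show ?thesis using cT by blast
qed

lemma suff:
  assumes gG: "is_graph VG EG" and gH: "is_graph VH EH"
    and cG: "connected_graph VG EG" and cH: "connected_graph VH EH"
    and uv: "is_hull_set VH EH {u, v}" and euv: "EH u v"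
    and S: "is_hull_set VG EG S" and part: "S1 \<union> S2 = S" "S1 \<inter> S2 = {}"
    and x: "x \<in> cycle_hull VG EG S1" "x \<in> cycle_hull VG EG S2"
  shows "\<exists>T. is_hull_set (VG \<times> VH) (box_edges EG EH) T \<and> card T \<le> card S"
proof -
  have SV: "S \<subseteq> VG" using S unfolding is_hull_set_def by blast
  have S2V: "S2 \<subseteq> VG" "S1 \<subseteq> VG" using SV part by auto
  define K where "K = {g \<in> cycle_hull VG EG S2. (rE EG (cycle_hull VG EG S2))\<^sup>*\<^sup>* x g}"
  have xK: "x \<in> K" and KU: "K \<subseteq> cycle_hull VG EG (S2 \<inter> K)" and Kw: "\<forall>g \<in> K. (rE EG K)\<^sup>*\<^sup>* x g"
    using split_comp[OF gG S2V(1) x(2)] unfolding K_def by blast+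
  define S2' where "S2' = S2 \<inter> K"
  define S1' where "S1' = S - S2'"
  have S1S1': "S1 \<subseteq> S1'" using part S1'_def S2'_def by blast
  have SS: "S = S1' \<union> S2'" using part S1'_def S2'_def by blast
  have uvV: "u \<in> VH" "v \<in> VH" using uv unfolding is_hull_set_def by auto
  have fS: "finite S" using SV gG unfolding is_graph_def by (meson finite_subset)
  define T where "T = (\<lambda>g. (g, u)) ` S1' \<union> (\<lambda>g. (g, v)) ` S2'"
  have "card T \<le> card ((\<lambda>g. (g, u)) ` S1') + card ((\<lambda>g. (g, v)) ` S2')" unfolding T_def by (rule card_Un_le)
  also have "\<dots> \<le> card S1' + card S2'"
    using card_image_le fS SS by (metis add_le_mono finite_Un)
  also have "\<dots> = card S"
  proof -
    have "S1' \<inter> S2' = {}" using S1'_def by blast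
    moreover have "finite S1'" "finite S2'" using fS SS by (metis finite_Un)+
    ultimately show ?thesis using SS card_Un_disjoint by metis
  qed
  finally have cT: "card T \<le> card S" .
  have "is_hull_set (VG \<times> VH) (box_edges EG EH) T"
  proof (rule hull_setI)
    show "T \<subseteq> VG \<times> VH" using SV SS uvV T_def by auto
  next
    fix C assume TC: "T \<subseteq> C" and CP: "C \<subseteq> VG \<times> VH" and cC: "cycle_convex (VG \<times> VH) (box_edges EG EH) C"
    let ?Du = "{g \<in> VG. (g, u) \<in> C}"
    let ?Dv = "{g \<in> VG. (g, v) \<in> C}"
    have cDu: "cycle_convex VG EG ?Du" using layer_convex[OF gG gH cC uvV(1)] .
    have cDv: "cycle_convex VG EG ?Dv" using layer_convex[OF gG gH cC uvV(2)] .
    have "S1 \<subseteq> ?Du" using S1S1' TC T_def SS SV by blast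
    then have xu: "x \<in> ?Du" using hull_least[OF _ _ cDu] x(1) by blast
    have "S2' \<subseteq> ?Dv" using TC T_def SS SV by blast
    then have KDv: "K \<subseteq> ?Dv" using hull_least[OF _ _ cDv] KU S2'_def by blast
    have "{u, v} \<subseteq> {h \<in> VH. (x, h) \<in> C}" using xu KDv xK uvV by blast
    moreover have xV: "x \<in> VG" using xu by blast
    ultimately have "{h \<in> VH. (x, h) \<in> C} = VH"
      using hull_set_convex[OF uv _ _ fiber_convex[OF gG gH cC xV]] by blast
    then have F: "\<forall>h \<in> VH. (x, h) \<in> C" by blast
    have KDu: "K \<subseteq> ?Du"
    proof
      fix g assume "g \<in> K"
      then have "(rE EG K)\<^sup>*\<^sup>* x g" using Kw by blast
      then show "g \<in> ?Du"
      proof (induction rule: rtranclp_induct)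
        case base then show ?case using xu by simp
      next
        case (step g1 g2)
        have e: "EG g1 g2" "g1 \<in> K" "g2 \<in> K" using step(2) unfolding rE_def by auto
        have "(g1, v) \<in> C" "(g2, v) \<in> C" "(g1, u) \<in> C" using e KDv step(3) by auto
        moreover have "EH v u" using euv gH unfolding is_graph_def by blast
        ultimately have "(g2, u) \<in> C" using square[OF gG gH cC] e(1) by blast
        then show ?case using e KDv by blast
      qed
    qed
    have "S \<subseteq> ?Du" using SS S1'_def TC T_def KDu S2'_def SV by blast
    then have "?Du = VG" using hull_set_convex[OF S _ _ cDu] by blast
    then have L: "\<forall>g \<in> VG. (g, u) \<in> C" by blast
    show "VG \<times> VH \<subseteq> C" using fill[OF gG gH cG cH cC uvV(1) xV L F] .
  qed
  then show ?thesis using cT by blast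
qed

lemma two_elems:
  assumes "nontrivial_graph V"
  shows "\<exists>a b. a \<in> V \<and> b \<in> V \<and> a \<noteq> b"
proof (rule ccontr)
  assume "\<not> ?thesis"
  then have "\<forall>a\<in>V. \<forall>b\<in>V. a = b" by blast
  moreover have "finite V" using assms unfolding nontrivial_graph_def by (metis card.infinite not_numeral_le_zero)
  ultimately have "card V \<le> Suc 0" using card_le_Suc0_iff_eq by blast
  then show False using assms unfolding nontrivial_graph_def by simp
qed

lemma hull2_adj:
  assumes gH: "is_graph VH EH" and cH: "connected_graph VH EH"
    and uv: "is_hull_set VH EH {u, v}" and ne: "u \<noteq> v"
  shows "EH u v"
proof (rule ccontr)
  assume nuv: "\<not> EH u v"
  have sym: "\<forall>a b. EH a b \<longrightarrow> EH b a" and irr: "\<forall>a. \<not> EH a a" using gH unfolding is_graph_def by blast+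
  have noe: "\<not> rE EH {u, v} a y" for a y
    using nuv sym irr unfolding rE_def by auto
  have "cycle_convex VH EH {u, v}" unfolding convex_iff_nb2[OF gH]
  proof (intro ballI notI)
    fix w assume "nb2 EH {u, v} w"
    then obtain a b where "a \<noteq> b" "(rE EH {u, v})\<^sup>*\<^sup>* a b" unfolding nb2_def by blast
    then show False using noe by (metis converse_rtranclpE)
  qed
  moreover have "{u, v} \<subseteq> VH" using uv unfolding is_hull_set_def by blast
  ultimately have VH: "VH = {u, v}" using hull_set_convex[OF uv] by blast
  have "EH\<^sup>*\<^sup>* u v" using cH VH unfolding connected_graph_def by blast
  then obtain y where y: "EH u y" using ne by (metis converse_rtranclpE)
  then have "y \<in> VH" "y \<noteq> u" using gH unfolding is_graph_def by blast+
  then show False using y VH nuv by blast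
qed

theorem mainTheorem8:
  fixes VG :: "'a set" and EG :: "'a \<Rightarrow> 'a \<Rightarrow> bool"
    and VH :: "'b set" and EH :: "'b \<Rightarrow> 'b \<Rightarrow> bool"
  assumes "is_graph VG EG" and "connected_graph VG EG" and "nontrivial_graph VG"
    and "is_graph VH EH" and "connected_graph VH EH" and "nontrivial_graph VH"
    and "hn_cc VH EH = 2"
  shows "hn_cc VG EG \<le> hn_cc (VG \<times> VH) (box_edges EG EH)
         \<and> hn_cc (VG \<times> VH) (box_edges EG EH) \<le> hn_cc VG EG + 1
         \<and> (hn_cc (VG \<times> VH) (box_edges EG EH) = hn_cc VG EG \<longleftrightarrow>
             (\<exists>S S1 S2. min_hull_set VG EG S \<and> S1 \<union> S2 = S \<and> S1 \<inter> S2 = {}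
                 \<and> S1 \<noteq> {} \<and> S2 \<noteq> {}
                 \<and> cycle_hull VG EG S1 \<inter> cycle_hull VG EG S2 \<noteq> {}))"
proof -
  note gG = assms(1) and cG = assms(2) and ntG = assms(3) and gH = assms(4) and cH = assms(5)
    and ntH = assms(6) and hnH = assms(7)
  let ?P = "VG \<times> VH" and ?EP = "box_edges EG EH"
  let ?k = "hn_cc VG EG" and ?kp = "hn_cc ?P ?EP"
  obtain SH where SH: "is_hull_set VH EH SH" "card SH = 2" using hn_ex[of VH EH] hnH
    unfolding min_hull_set_def by auto
  then obtain u v where uv0: "SH = {u, v}" "u \<noteq> v" by (meson card_2_iff)
  have uv: "is_hull_set VH EH {u, v}" using SH uv0 by simp
  have euv: "EH u v" using hull2_adj[OF gH cH uv uv0(2)] .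
  have fP: "finite ?P" using gG gH unfolding is_graph_def by simp
  have neH: "VH \<noteq> {}" using two_elems[OF ntH] by blast
  obtain T where T: "is_hull_set ?P ?EP T" "card T = ?kp" using hn_ex[of ?P ?EP]
    unfolding min_hull_set_def by blast
  have fT: "finite T" using T(1) fP unfolding is_hull_set_def by (meson finite_subset)
  have ST: "is_hull_set VG EG (fst ` T)" using proj_hull[OF gG gH neH T(1)] .
  have k1: "?k \<le> card (fst ` T)" using hn_le[OF ST] .
  have k2: "card (fst ` T) \<le> card T" using card_image_le[OF fT] .
  have A: "?k \<le> ?kp" using k1 k2 T(2) by simp
  obtain SG where SG: "is_hull_set VG EG SG" "card SG = ?k" using hn_ex[of VG EG]
    unfolding min_hull_set_def by blast
  have "SG \<noteq> {}"
  proof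
    assume "SG = {}"
    then have "VG = {}" using SG(1) hull_empty[of VG EG] unfolding is_hull_set_def by simp
    then show False using two_elems[OF ntG] by blast
  qed
  then obtain g0 where g0: "g0 \<in> SG" by blast
  obtain TB where TB: "is_hull_set ?P ?EP TB" "card TB \<le> card SG + 1"
    using upper[OF gG gH cG cH uv SG(1) g0] by blast
  have B: "?kp \<le> ?k + 1" using hn_le[OF TB(1)] TB(2) SG(2) by simp
  have C1: "?kp = ?k" if ex: "\<exists>S S1 S2. min_hull_set VG EG S \<and> S1 \<union> S2 = S \<and> S1 \<inter> S2 = {}
                 \<and> S1 \<noteq> {} \<and> S2 \<noteq> {}
                 \<and> cycle_hull VG EG S1 \<inter> cycle_hull VG EG S2 \<noteq> {}"
  proof -
    obtain S S1 S2 x where h: "min_hull_set VG EG S" "S1 \<union> S2 = S" "S1 \<inter> S2 = {}"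
      "x \<in> cycle_hull VG EG S1" "x \<in> cycle_hull VG EG S2" using ex by blast
    obtain T' where T': "is_hull_set ?P ?EP T'" "card T' \<le> card S"
      using suff[OF gG gH cG cH uv euv _ h(2,3,4,5)] h(1) unfolding min_hull_set_def by blast
    have "?kp \<le> ?k" using hn_le[OF T'(1)] T'(2) h(1) unfolding min_hull_set_def by simp
    then show ?thesis using A by simp
  qed
  have C2: "\<exists>S S1 S2. min_hull_set VG EG S \<and> S1 \<union> S2 = S \<and> S1 \<inter> S2 = {}
                 \<and> S1 \<noteq> {} \<and> S2 \<noteq> {}
                 \<and> cycle_hull VG EG S1 \<inter> cycle_hull VG EG S2 \<noteq> {}" if eq: "?kp = ?k"
  proof (rule ccontr)
    assume nex: "\<not> ?thesis"
    let ?S = "fst ` T"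
    have cS: "card ?S = card T" using k1 k2 T(2) eq by simp
    have inj: "inj_on fst T" using cS inj_on_iff_eq_card[OF fT] by blast
    have minS: "min_hull_set VG EG ?S" using ST cS T(2) eq unfolding min_hull_set_def by simp
    have SV: "?S \<subseteq> VG" using ST unfolding is_hull_set_def by blast
    define L where "L h = {g. (g, h) \<in> T}" for h
    define A where "A h = cycle_hull VG EG (L h)" for h
    have LS: "L h \<subseteq> ?S" for h using L_def by force
    have disj: "\<forall>h1 \<in> VH. \<forall>h2 \<in> VH. h1 \<noteq> h2 \<longrightarrow> A h1 \<inter> A h2 = {}"
    proof (intro ballI impI)
      fix h1 h2 assume h12: "h1 \<in> VH" "h2 \<in> VH" "h1 \<noteq> h2"
      let ?S1 = "L h1" and ?S2 = "?S - L h1"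
      have "L h2 \<subseteq> ?S2"
      proof
        fix g assume "g \<in> L h2"
        then have g2: "(g, h2) \<in> T" using L_def by simp
        moreover have "(g, h1) \<notin> T"
        proof
          assume "(g, h1) \<in> T"
          then have "(g, h1) = (g, h2)" using inj g2 unfolding inj_on_def by fastforce
          then show False using h12 by simp
        qed
        ultimately show "g \<in> ?S2" using L_def by force
      qed
      then have sub: "A h2 \<subseteq> cycle_hull VG EG ?S2" unfolding A_def using hull_mono SV by blast
      have "cycle_hull VG EG ?S1 \<inter> cycle_hull VG EG ?S2 = {}"
      proof (cases "?S1 = {}")
        case True
        then show ?thesis using hull_empty[of VG EG] by simp
      next
        case F1: False
        show ?thesis
        proof (cases "?S2 = {}")
          case True
          then have "cycle_hull VG EG ?S2 = {}" by (simp only: True hull_empty)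
          then show ?thesis by simp
        next
          case F2: False
          have "?S1 \<union> ?S2 = ?S" "?S1 \<inter> ?S2 = {}" using LS by blast+
          then show ?thesis using nex minS F1 F2 by blast
        qed
      qed
      then show "A h1 \<inter> A h2 = {}" using sub A_def by blast
    qed
    have cA: "\<forall>h \<in> VH. cycle_convex VG EG (A h)"
    proof
      fix h
      have "L h \<subseteq> VG" using LS SV by blast
      then show "cycle_convex VG EG (A h)" unfolding A_def by (rule hull_convex)
    qed
    let ?C = "{p \<in> ?P. fst p \<in> A (snd p)}"
    have cC: "cycle_convex ?P ?EP ?C" using layered_convex[OF gG gH cA disj] .
    have "T \<subseteq> ?C"
    proof
      fix p assume p: "p \<in> T"
      then have "p \<in> ?P" using T(1) unfolding is_hull_set_def by blast
      moreover have "fst p \<in> L (snd p)" using p L_def by simp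
      moreover have "L (snd p) \<subseteq> A (snd p)" unfolding A_def by (rule hull_incl)
      ultimately show "p \<in> ?C" by blast
    qed
    then have CP: "?C = ?P" using hull_set_convex[OF T(1) _ _ cC] by blast
    obtain g where g: "g \<in> VG" using two_elems[OF ntG] by blast
    obtain h1 h2 where h: "h1 \<in> VH" "h2 \<in> VH" "h1 \<noteq> h2" using two_elems[OF ntH] by blast
    have "(g, h1) \<in> ?C" "(g, h2) \<in> ?C" using g h by (simp_all only: CP) simp_all
    then have "g \<in> A h1" "g \<in> A h2" by simp_all
    then show False using disj h by blast
  qed
  show ?thesis
  proof (intro conjI)
    show "?k \<le> ?kp" using A .
    show "?kp \<le> ?k + 1" using B .
    show "(?kp = ?k) = (\<exists>S S1 S2. min_hull_set VG EG S \<and> S1 \<union> S2 = S \<and> S1 \<inter> S2 = {}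
                 \<and> S1 \<noteq> {} \<and> S2 \<noteq> {}
                 \<and> cycle_hull VG EG S1 \<inter> cycle_hull VG EG S2 \<noteq> {})"
      using C1 C2 by (rule iffI[rotated]) 
  qed
qed

end
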